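(* Let $\mathbf K$ be the linearly ordered set obtained from the lexicographic product $\mathbb N\ltimes\mathbb N$ (elements $m\ltimes n$ with $m,n\in\mathbb N$, ordered by $m\ltimes n< m'\ltimes n'$ iff $m<m'$, or $m=m'$ and $n<n'$) by adding a top element $\omega^2$, regarded as a complete lattice, and let $\mathbf L=\mathbf K\times\{0,1\}$ be the product lattice (componentwise order, $0<1$). Then in the complete lattice $\mathbf L$ the element $(\omega^2,0)$ is a relative generator, but $(\omega^2,0)$ belongs to the complete sublattice generated by the set $\Gamma$ of all non-generators of $\mathbf L$. In particular, $\Gamma$ is not a complete sublattice of $\mathbf L$.
   Context: A complete lattice is a partially ordered set in which every subset (including the empty set) has a meet and a join. A complete sublattice of a complete lattice $\mathbf L$ is a subset $T\subseteq L$ closed under arbitrary meets and joins computed in $L$, including those of the empty set (so $T$ contains the minimum and maximum of $L$). For $X\subseteq L$, $\langle X\rangle$ (the complete sublattice generated by $X$) is the intersection of all complete sublattices containing $X$, and $\langle X,a\rangle=\langle X\cup\{a\}\rangle$. An element $a$ is a non-generator if for every $X\subseteq L$, $\langle X,a\rangle=L$ implies $\langle X\rangle=L$; otherwise $a$ is a relative generator. *)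

theory Defs
  imports Main
begin

text \<open>The ambient complete lattice is the whole type, ordered by the relation le.
  Meets and joins are greatest lower / least upper bounds with respect to le.\<close>

definition is_lub :: "('a \<Rightarrow> 'a \<Rightarrow> bool) \<Rightarrow> 'a set \<Rightarrow> 'a \<Rightarrow> bool" where
  "is_lub le A x \<longleftrightarrow> (\<forall>a\<in>A. le a x) \<and> (\<forall>y. (\<forall>a\<in>A. le a y) \<longrightarrow> le x y)"

definition is_glb :: "('a \<Rightarrow> 'a \<Rightarrow> bool) \<Rightarrow> 'a set \<Rightarrow> 'a \<Rightarrow> bool" where
  "is_glb le A x \<longleftrightarrow> (\<forall>a\<in>A. le x a) \<and> (\<forall>y. (\<forall>a\<in>A. le y a) \<longrightarrow> le y x)"

text \<open>Closed under arbitrary joins and meets (including those of the empty set).\<close>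
definition complete_sublattice :: "('a \<Rightarrow> 'a \<Rightarrow> bool) \<Rightarrow> 'a set \<Rightarrow> bool" where
  "complete_sublattice le T \<longleftrightarrow>
     (\<forall>A x. A \<subseteq> T \<longrightarrow> is_lub le A x \<longrightarrow> x \<in> T) \<and>
     (\<forall>A x. A \<subseteq> T \<longrightarrow> is_glb le A x \<longrightarrow> x \<in> T)"

definition generated :: "('a \<Rightarrow> 'a \<Rightarrow> bool) \<Rightarrow> 'a set \<Rightarrow> 'a set" where
  "generated le X = \<Inter> {T. complete_sublattice le T \<and> X \<subseteq> T}"

definition non_generator :: "('a \<Rightarrow> 'a \<Rightarrow> bool) \<Rightarrow> 'a \<Rightarrow> bool" where
  "non_generator le a \<longleftrightarrow>
     (\<forall>X. generated le (insert a X) = UNIV \<longrightarrow> generated le X = UNIV)"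

definition relative_generator :: "('a \<Rightarrow> 'a \<Rightarrow> bool) \<Rightarrow> 'a \<Rightarrow> bool" where
  "relative_generator le a \<longleftrightarrow> \<not> non_generator le a"

text \<open>K = (N lex N) plus a top element omega^2.  Pt m n stands for m \<ltimes> n.\<close>
datatype kel = Pt nat nat | Omega2

fun kle :: "kel \<Rightarrow> kel \<Rightarrow> bool" where
  "kle (Pt m n) (Pt m' n') \<longleftrightarrow> m < m' \<or> (m = m' \<and> n \<le> n')"
| "kle _ Omega2 \<longleftrightarrow> True"
| "kle Omega2 (Pt _ _) \<longleftrightarrow> False"

text \<open>L = K \<times> {0,1}, componentwise order; False = 0, True = 1.\<close>
definition lle :: "kel \<times> bool \<Rightarrow> kel \<times> bool \<Rightarrow> bool" where
  "lle p q \<longleftrightarrow> kle (fst p) (fst q) \<and> (snd p \<longrightarrow> snd q)"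

end

theory Submission
  imports Defs
begin

lemma cs_lub: "complete_sublattice le T \<Longrightarrow> A \<subseteq> T \<Longrightarrow> is_lub le A x \<Longrightarrow> x \<in> T"
  unfolding complete_sublattice_def by blast

lemma cs_glb: "complete_sublattice le T \<Longrightarrow> A \<subseteq> T \<Longrightarrow> is_glb le A x \<Longrightarrow> x \<in> T"
  unfolding complete_sublattice_def by blast

lemma gen_sub: "X \<subseteq> generated le X"
  unfolding generated_def by blast

lemma gen_least: "complete_sublattice le T \<Longrightarrow> X \<subseteq> T \<Longrightarrow> generated le X \<subseteq> T"
  unfolding generated_def by blast

lemma gen_cs: "complete_sublattice le (generated le X)"
proof -
  have "x \<in> generated le X" if "A \<subseteq> generated le X" "is_lub le A x \<or> is_glb le A x" for A x
    unfolding generated_def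
  proof (rule InterI)
    fix T assume T: "T \<in> {T. complete_sublattice le T \<and> X \<subseteq> T}"
    then have c: "complete_sublattice le T" by simp
    have "A \<subseteq> T" using that(1) T unfolding generated_def by (auto simp del: is_lub_def)
    then show "x \<in> T" using that(2) cs_lub[OF c] cs_glb[OF c] by metis
  qed
  then show ?thesis unfolding complete_sublattice_def by metis
qed

lemma S_gamma: "complete_sublattice lle {p. snd p \<or> kle (fst p) g}"
proof -
  have trans: "kle x y \<Longrightarrow> kle y z \<Longrightarrow> kle x z" for x y z
    by (cases x; cases y; cases z) auto
  show ?thesis
    unfolding complete_sublattice_def
  proof (intro conjI allI impI)
    fix A x assume A: "A \<subseteq> {p. snd p \<or> kle (fst p) g}" and l: "is_lub lle A x"
    show "x \<in> {p. snd p \<or> kle (fst p) g}"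
    proof (cases "\<exists>a\<in>A. snd a")
      case True
      then show ?thesis using l unfolding is_lub_def lle_def by auto
    next
      case False
      then have "\<forall>a\<in>A. lle a (g, False)" using A unfolding lle_def by auto
      then have "lle x (g, False)" using l unfolding is_lub_def by auto
      then show ?thesis unfolding lle_def by auto
    qed
  next
    fix A x assume A: "A \<subseteq> {p. snd p \<or> kle (fst p) g}" and l: "is_glb lle A x"
    show "x \<in> {p. snd p \<or> kle (fst p) g}"
    proof (cases "\<exists>a\<in>A. \<not> snd a")
      case True
      then obtain a where "a \<in> A" "\<not> snd a" by auto
      then have "kle (fst a) g" "lle x a" using A l unfolding is_glb_def by auto
      then have "kle (fst x) (fst a)" unfolding lle_def by simp
      then have "kle (fst x) g" using trans \<open>kle (fst a) g\<close> by blast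
      then show ?thesis by simp
    next
      case False
      have "\<forall>a\<in>A. lle (fst x, True) a"
      proof
        fix a assume "a \<in> A"
        then have "lle x a" "snd a" using l False unfolding is_glb_def by auto
        then show "lle (fst x, True) a" unfolding lle_def by simp
      qed
      then have "lle (fst x, True) x" using l unfolding is_glb_def by auto
      then show ?thesis unfolding lle_def by auto
    qed
  qed
qed

lemma S_c: "complete_sublattice lle {p. fst p \<noteq> Pt m (Suc k)}"
  unfolding complete_sublattice_def
proof (intro conjI allI impI)
  fix A x assume A: "A \<subseteq> {p. fst p \<noteq> Pt m (Suc k)}" and l: "is_lub lle A x"
  show "x \<in> {p. fst p \<noteq> Pt m (Suc k)}"
  proof (rule ccontr)
    assume "x \<notin> {p. fst p \<noteq> Pt m (Suc k)}"
    then have fx: "fst x = Pt m (Suc k)" by auto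
    have h: "kle y (Pt m (Suc k)) \<Longrightarrow> y \<noteq> Pt m (Suc k) \<Longrightarrow> kle y (Pt m k)" for y
      by (cases y) auto
    have "\<forall>a\<in>A. lle a (Pt m k, snd x)"
    proof
      fix a assume "a \<in> A"
      then have "lle a x" "fst a \<noteq> Pt m (Suc k)" using l A unfolding is_lub_def by auto
      then show "lle a (Pt m k, snd x)" using h fx unfolding lle_def by auto
    qed
    then have "lle x (Pt m k, snd x)" using l unfolding is_lub_def by auto
    then show False using fx unfolding lle_def by auto
  qed
next
  fix A x assume A: "A \<subseteq> {p. fst p \<noteq> Pt m (Suc k)}" and l: "is_glb lle A x"
  show "x \<in> {p. fst p \<noteq> Pt m (Suc k)}"
  proof (rule ccontr)
    assume "x \<notin> {p. fst p \<noteq> Pt m (Suc k)}"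
    then have fx: "fst x = Pt m (Suc k)" by auto
    have h: "kle (Pt m (Suc k)) y \<Longrightarrow> y \<noteq> Pt m (Suc k) \<Longrightarrow> kle (Pt m (Suc (Suc k))) y" for y
      by (cases y) auto
    have "\<forall>a\<in>A. lle (Pt m (Suc (Suc k)), snd x) a"
    proof
      fix a assume "a \<in> A"
      then have "lle x a" "fst a \<noteq> Pt m (Suc k)" using l A unfolding is_glb_def by auto
      then show "lle (Pt m (Suc (Suc k)), snd x) a" using h fx unfolding lle_def by auto
    qed
    then have "lle (Pt m (Suc (Suc k)), snd x) x" using l unfolding is_glb_def by auto
    then show False using fx unfolding lle_def by auto
  qed
qed

lemma rel_gen: "relative_generator lle (Omega2, False)"
  unfolding relative_generator_def non_generator_def
proof
  assume H: "\<forall>X. generated lle (insert (Omega2, False) X) = UNIV \<longrightarrow> generated lle X = UNIV"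
  let ?X = "range (\<lambda>k. (k, True))"
  have "generated lle (insert (Omega2, False) ?X) = UNIV"
  proof -
    have "UNIV \<subseteq> T" if T: "T \<in> {T. complete_sublattice lle T \<and> insert (Omega2, False) ?X \<subseteq> T}" for T
    proof
      fix p :: "kel \<times> bool"
      obtain k b where p: "p = (k, b)" by fastforce
      show "p \<in> T"
      proof (cases b)
        case True then show ?thesis using T p by auto
      next
        case False
        have "is_glb lle {(k, True), (Omega2, False)} (k, False)"
          unfolding is_glb_def lle_def by (cases k) auto
        moreover have "{(k, True), (Omega2, False)} \<subseteq> T" using T by auto
        moreover have cT: "complete_sublattice lle T" using T by simp
        ultimately have "(k, False) \<in> T" using cs_glb[of lle T] by metis
        then show ?thesis using p False by simp
      qed
    qed
    then show ?thesis unfolding generated_def by blast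
  qed
  then have "generated lle ?X = UNIV" using H by blast
  moreover have "generated lle ?X \<subseteq> {p. snd p \<or> kle (fst p) (Pt 0 0)}"
    by (rule gen_least[OF S_gamma]) auto
  ultimately have "(Omega2, False) \<in> {p. snd p \<or> kle (fst p) (Pt 0 0)}" by blast
  then show False by simp
qed

lemma non_gen: "non_generator lle (Pt (Suc m) 0, False)"
  unfolding non_generator_def
proof (intro allI impI)
  fix X
  let ?a = "(Pt (Suc m) 0, False)"
  assume H: "generated lle (insert ?a X) = UNIV"
  let ?T = "generated lle X"
  have cT: "complete_sublattice lle ?T" by (rule gen_cs)
  have XT: "X \<subseteq> ?T" by (rule gen_sub)
  have aT: "?a \<in> ?T"
  proof (rule ccontr)
    assume naT: "?a \<notin> ?T"
    have "\<exists>N. \<forall>n\<ge>N. (Pt m n, False) \<notin> ?T"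
    proof (rule ccontr)
      assume "\<not> (\<exists>N. \<forall>n\<ge>N. (Pt m n, False) \<notin> ?T)"
      then have unb: "\<forall>N. \<exists>n\<ge>N. (Pt m n, False) \<in> ?T" by auto
      let ?A = "{p \<in> ?T. \<exists>n. p = (Pt m n, False)}"
      have lubA: "is_lub lle ?A ?a"
        unfolding is_lub_def
      proof (intro conjI allI impI ballI)
        fix p assume "p \<in> ?A" then show "lle p ?a" unfolding lle_def by auto
      next
        fix y assume yb: "\<forall>p\<in>?A. lle p y"
        show "lle ?a y"
        proof (cases "fst y")
          case (Pt m1 k)
          obtain n where n: "n \<ge> Suc k" "(Pt m n, False) \<in> ?T" using unb by blast
          then have "lle (Pt m n, False) y" using yb by auto
          then show ?thesis using Pt n unfolding lle_def by auto
        next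
          case Omega2 then show ?thesis unfolding lle_def by auto
        qed
      qed
      have sA: "?A \<subseteq> ?T" by (rule subsetI) (drule CollectD, erule conjunct1)
      have "?a \<in> ?T" by (rule cs_lub[OF cT sA lubA])
      then show False using naT by blast
    qed
    then obtain N where N: "\<forall>n\<ge>N. (Pt m n, False) \<notin> ?T" by blast
    show False
    proof (cases "(Omega2, False) \<in> ?T")
      case True
      have c1: "(Pt m (Suc N), True) \<notin> ?T"
      proof
        assume "(Pt m (Suc N), True) \<in> ?T"
        moreover have "is_glb lle {(Pt m (Suc N), True), (Omega2, False)} (Pt m (Suc N), False)"
          unfolding is_glb_def lle_def by auto
        moreover have "{(Pt m (Suc N), True), (Omega2, False)} \<subseteq> ?T" using True calculation(1) by simp
        ultimately have "(Pt m (Suc N), False) \<in> ?T" using cs_glb[OF cT] by metis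
        then show False using N by auto
      qed
      have c0: "(Pt m (Suc N), False) \<notin> ?T" using N by auto
      have "insert ?a X \<subseteq> {p. fst p \<noteq> Pt m (Suc N)}"
      proof
        fix p assume "p \<in> insert ?a X"
        then have "p = ?a \<or> p \<in> ?T" using XT by auto
        moreover obtain k b where "p = (k, b)" by fastforce
        ultimately show "p \<in> {p. fst p \<noteq> Pt m (Suc N)}" using c1 c0 by (cases b) auto
      qed
      then have "generated lle (insert ?a X) \<subseteq> {p. fst p \<noteq> Pt m (Suc N)}"
        by (rule gen_least[OF S_c])
      moreover have "(Pt m (Suc N), False) \<in> generated lle (insert ?a X)" using H by simp
      ultimately have "(Pt m (Suc N), False) \<in> {p. fst p \<noteq> Pt m (Suc N)}" by (rule subsetD)
      then show False by simp
    next
      case False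
      have "\<exists>m0. \<forall>m' n. (Pt m' n, False) \<in> ?T \<longrightarrow> m' \<le> m0"
      proof (rule ccontr)
        assume "\<not> (\<exists>m0. \<forall>m' n. (Pt m' n, False) \<in> ?T \<longrightarrow> m' \<le> m0)"
        then have unb: "\<forall>m0. \<exists>m' n. (Pt m' n, False) \<in> ?T \<and> m' > m0" by (auto simp: not_le)
        let ?A = "{p \<in> ?T. \<exists>m' n. p = (Pt m' n, False)}"
        have lubA: "is_lub lle ?A (Omega2, False)"
          unfolding is_lub_def
        proof (intro conjI allI impI ballI)
          fix p assume "p \<in> ?A" then show "lle p (Omega2, False)" unfolding lle_def by auto
        next
          fix y assume yb: "\<forall>p\<in>?A. lle p y"
          show "lle (Omega2, False) y"
          proof (cases "fst y")
            case (Pt m1 k)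
            obtain m' n where n: "m' > m1" "(Pt m' n, False) \<in> ?T" using unb by blast
            then have "lle (Pt m' n, False) y" using yb by auto
            then show ?thesis using Pt n unfolding lle_def by auto
          next
            case Omega2 then show ?thesis unfolding lle_def by auto
          qed
        qed
        have sA: "?A \<subseteq> ?T" by (rule subsetI) (drule CollectD, erule conjunct1)
        have "(Omega2, False) \<in> ?T" by (rule cs_lub[OF cT sA lubA])
        then show False using False by blast
      qed
      then obtain m0 where m0: "\<forall>m' n. (Pt m' n, False) \<in> ?T \<longrightarrow> m' \<le> m0" by blast
      let ?g = "Pt (m0 + m + 2) 0"
      have "insert ?a X \<subseteq> {p. snd p \<or> kle (fst p) ?g}"
      proof
        fix p assume "p \<in> insert ?a X"
        then have pp: "p = ?a \<or> p \<in> ?T" using XT by auto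
        obtain k b where kb: "p = (k, b)" by fastforce
        show "p \<in> {p. snd p \<or> kle (fst p) ?g}"
        proof (cases "p = ?a")
          case True then show ?thesis by auto
        next
          case na: False
          then have pT: "p \<in> ?T" using pp by auto
          show ?thesis
          proof (cases b)
            case True then show ?thesis using kb by auto
          next
            case bF: False
            show ?thesis
            proof (cases k)
              case (Pt m' n)
              then have "m' \<le> m0" using m0 pT kb bF by auto
              then show ?thesis using Pt kb by auto
            next
              case Omega2
              then show ?thesis using pT kb bF False by auto
            qed
          qed
        qed
      qed
      then have "generated lle (insert ?a X) \<subseteq> {p. snd p \<or> kle (fst p) ?g}"
        by (rule gen_least[OF S_gamma])
      moreover have "(Omega2, False) \<in> generated lle (insert ?a X)" using H by simp
      ultimately show False by auto
    qed
  qed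
  have "generated lle (insert ?a X) \<subseteq> ?T"
    using gen_least[OF cT] aT XT by blast
  then show "?T = UNIV" using H by blast
qed

lemma in_gen: "(Omega2, False) \<in> generated lle {a. non_generator lle a}"
proof -
  have "(Omega2, False) \<in> T" if T: "complete_sublattice lle T" "{a. non_generator lle a} \<subseteq> T" for T
  proof -
    let ?A = "range (\<lambda>m. (Pt (Suc m) 0, False))"
    have AT: "?A \<subseteq> T" using T non_gen by auto
    have "is_lub lle ?A (Omega2, False)"
      unfolding is_lub_def
    proof (intro conjI allI impI ballI)
      fix p assume "p \<in> ?A" then show "lle p (Omega2, False)" unfolding lle_def by auto
    next
      fix y assume yb: "\<forall>p\<in>?A. lle p y"
      show "lle (Omega2, False) y"
      proof (cases "fst y")
        case (Pt m1 k)
        have "lle (Pt (Suc m1) 0, False) y" using yb by auto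
        then show ?thesis using Pt unfolding lle_def by auto
      next
        case Omega2 then show ?thesis unfolding lle_def by auto
      qed
    qed
    then show ?thesis using cs_lub[OF T(1) AT] by blast
  qed
  then show ?thesis unfolding generated_def by blast
qed

theorem theorem4:
  shows "relative_generator lle (Omega2, False)
       \<and> (Omega2, False) \<in> generated lle {a. non_generator lle a}
       \<and> \<not> complete_sublattice lle {a. non_generator lle a}"
proof (intro conjI)
  show "relative_generator lle (Omega2, False)" by (rule rel_gen)
  show "(Omega2, False) \<in> generated lle {a. non_generator lle a}" by (rule in_gen)
  show "\<not> complete_sublattice lle {a. non_generator lle a}"
  proof
    assume "complete_sublattice lle {a. non_generator lle a}"
    then have "generated lle {a. non_generator lle a} \<subseteq> {a. non_generator lle a}"
      by (rule gen_least) auto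
    then show False using in_gen rel_gen unfolding relative_generator_def by auto
  qed
qed

end
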